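(* Let $\Omega$ be a set endowed with a well-order $\le^*$, and let a group $G$ act faithfully on $\Omega$ preserving a total order $\le$ on $\Omega$. Then there exists a left-ordering of $G$ for which the pointwise stabilizer $G_{\Omega_0}$ of every initial segment $\Omega_0$ of $(\Omega,\le^* )$ is convex. Moreover, if the action has no crossings, this left-ordering is Conradian.
   Context: A left-ordering is a total order on $G$ invariant under left multiplication; a subgroup $H$ is convex if $f_1\prec h\prec f_2$ with $f_1,f_2\in H$ implies $h\in H$; a left-ordering is Conradian if for all $f\succ id$, $g\succ id$ there is $n\in\mathbb{N}$ with $fg^n\succ g$. A crossing for the action on $(\Omega,\le)$ is a 5-tuple $(f,g,u,v,w)$, $f,g\in G$, $u,v,w\in\Omega$, with $u<w<v$; $g^nu<v$ and $f^nv>u$ for all $n\in\mathbb{N}$; and $f^Nv<w<g^Mu$ for some $M,N\in\mathbb{N}$. *)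

theory Defs
  imports "HOL-Algebra.Group_Action"
begin

definition left_ordering :: "('g, 'm) monoid_scheme \<Rightarrow> ('g \<Rightarrow> 'g \<Rightarrow> bool) \<Rightarrow> bool" where
  "left_ordering G lt \<longleftrightarrow>
     (\<forall>x y. lt x y \<longrightarrow> x \<in> carrier G \<and> y \<in> carrier G) \<and>
     (\<forall>x \<in> carrier G. \<not> lt x x) \<and>
     (\<forall>x \<in> carrier G. \<forall>y \<in> carrier G. \<forall>z \<in> carrier G. lt x y \<longrightarrow> lt y z \<longrightarrow> lt x z) \<and>
     (\<forall>x \<in> carrier G. \<forall>y \<in> carrier G. x \<noteq> y \<longrightarrow> lt x y \<or> lt y x) \<and>
     (\<forall>g \<in> carrier G. \<forall>x \<in> carrier G. \<forall>y \<in> carrier G.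
        lt x y \<longrightarrow> lt (g \<otimes>\<^bsub>G\<^esub> x) (g \<otimes>\<^bsub>G\<^esub> y))"

definition convex_subgroup_wrt :: "('g, 'm) monoid_scheme \<Rightarrow> ('g \<Rightarrow> 'g \<Rightarrow> bool) \<Rightarrow> 'g set \<Rightarrow> bool" where
  "convex_subgroup_wrt G lt H \<longleftrightarrow>
     (\<forall>f1 \<in> H. \<forall>f2 \<in> H. \<forall>h \<in> carrier G. lt f1 h \<longrightarrow> lt h f2 \<longrightarrow> h \<in> H)"

definition conradian :: "('g, 'm) monoid_scheme \<Rightarrow> ('g \<Rightarrow> 'g \<Rightarrow> bool) \<Rightarrow> bool" where
  "conradian G lt \<longleftrightarrow>
     (\<forall>f \<in> carrier G. \<forall>g \<in> carrier G. lt \<one>\<^bsub>G\<^esub> f \<longrightarrow> lt \<one>\<^bsub>G\<^esub> g \<longrightarrow>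
        (\<exists>n::nat. n \<ge> 1 \<and> lt g (f \<otimes>\<^bsub>G\<^esub> (g [^]\<^bsub>G\<^esub> n))))"

definition initial_segment :: "'w set \<Rightarrow> 'w rel \<Rightarrow> 'w set \<Rightarrow> bool" where
  "initial_segment \<Omega> W \<Omega>0 \<longleftrightarrow> \<Omega>0 \<subseteq> \<Omega> \<and> (\<forall>x \<in> \<Omega>0. \<forall>y \<in> \<Omega>. (y, x) \<in> W \<longrightarrow> y \<in> \<Omega>0)"

definition pointwise_stabilizer :: "('g, 'm) monoid_scheme \<Rightarrow> ('g \<Rightarrow> 'w \<Rightarrow> 'w) \<Rightarrow> 'w set \<Rightarrow> 'g set" where
  "pointwise_stabilizer G \<phi> \<Omega>0 = {g \<in> carrier G. \<forall>x \<in> \<Omega>0. \<phi> g x = x}"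

definition strict_rel :: "'w rel \<Rightarrow> 'w \<Rightarrow> 'w \<Rightarrow> bool" where
  "strict_rel r x y \<longleftrightarrow> (x, y) \<in> r \<and> x \<noteq> y"

definition is_crossing ::
  "('g, 'm) monoid_scheme \<Rightarrow> 'w set \<Rightarrow> 'w rel \<Rightarrow> ('g \<Rightarrow> 'w \<Rightarrow> 'w) \<Rightarrow> 'g \<Rightarrow> 'g \<Rightarrow> 'w \<Rightarrow> 'w \<Rightarrow> 'w \<Rightarrow> bool" where
  "is_crossing G \<Omega> r \<phi> f g u v w \<longleftrightarrow>
     f \<in> carrier G \<and> g \<in> carrier G \<and> u \<in> \<Omega> \<and> v \<in> \<Omega> \<and> w \<in> \<Omega> \<and>
     strict_rel r u w \<and> strict_rel r w v \<and>
     (\<forall>n::nat. strict_rel r (\<phi> (g [^]\<^bsub>G\<^esub> n) u) v \<and> strict_rel r u (\<phi> (f [^]\<^bsub>G\<^esub> n) v)) \<and>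
     (\<exists>(M::nat) (N::nat). strict_rel r (\<phi> (f [^]\<^bsub>G\<^esub> N) v) w \<and> strict_rel r w (\<phi> (g [^]\<^bsub>G\<^esub> M) u))"

end

theory Submission
  imports Defs
begin

locale S =
  fixes G (structure) and \<Omega> :: "'w set" and r :: "'w rel" and W :: "'w rel" and \<phi> :: "'g \<Rightarrow> 'w \<Rightarrow> 'w"
  assumes grp: "group G"
    and wo: "well_order_on \<Omega> W"
    and lo: "linear_order_on \<Omega> r"
    and act: "group_action G \<Omega> \<phi>"
    and faith: "\<forall>g \<in> carrier G. (\<forall>x \<in> \<Omega>. \<phi> g x = x) \<longrightarrow> g = \<one>"
    and op: "\<forall>g \<in> carrier G. \<forall>x \<in> \<Omega>. \<forall>y \<in> \<Omega>. (x, y) \<in> r \<longrightarrow> (\<phi> g x, \<phi> g y) \<in> r"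

sublocale S \<subseteq> group G by (rule grp)
sublocale S \<subseteq> ga: group_action G \<Omega> \<phi> by (rule act)

context S
begin

abbreviation sr where "sr \<equiv> strict_rel r"

lemma rO: "(x,y) \<in> r \<Longrightarrow> x \<in> \<Omega> \<and> y \<in> \<Omega>"
  using lo unfolding linear_order_on_def partial_order_on_def preorder_on_def by blast
lemma r_refl: "x \<in> \<Omega> \<Longrightarrow> (x,x) \<in> r"
  using lo unfolding linear_order_on_def partial_order_on_def preorder_on_def refl_on_def by blast
lemma r_trans: "(x,y) \<in> r \<Longrightarrow> (y,z) \<in> r \<Longrightarrow> (x,z) \<in> r"
  using lo unfolding linear_order_on_def partial_order_on_def preorder_on_def trans_def by blast
lemma r_antisym: "(x,y) \<in> r \<Longrightarrow> (y,x) \<in> r \<Longrightarrow> x = y"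
  using lo unfolding linear_order_on_def partial_order_on_def antisym_def by blast
lemma r_total: "x \<in> \<Omega> \<Longrightarrow> y \<in> \<Omega> \<Longrightarrow> x \<noteq> y \<Longrightarrow> (x,y) \<in> r \<or> (y,x) \<in> r"
  using lo unfolding linear_order_on_def total_on_def by blast

lemma WO: "(x,y) \<in> W \<Longrightarrow> x \<in> \<Omega> \<and> y \<in> \<Omega>"
  using wo unfolding well_order_on_def linear_order_on_def partial_order_on_def preorder_on_def by blast
lemma W_refl: "x \<in> \<Omega> \<Longrightarrow> (x,x) \<in> W"
  using wo unfolding well_order_on_def linear_order_on_def partial_order_on_def preorder_on_def refl_on_def by blast
lemma W_trans: "(x,y) \<in> W \<Longrightarrow> (y,z) \<in> W \<Longrightarrow> (x,z) \<in> W"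
  using wo unfolding well_order_on_def linear_order_on_def partial_order_on_def preorder_on_def trans_def by blast
lemma W_antisym: "(x,y) \<in> W \<Longrightarrow> (y,x) \<in> W \<Longrightarrow> x = y"
  using wo unfolding well_order_on_def linear_order_on_def partial_order_on_def antisym_def by blast
lemma W_total: "x \<in> \<Omega> \<Longrightarrow> y \<in> \<Omega> \<Longrightarrow> x \<noteq> y \<Longrightarrow> (x,y) \<in> W \<or> (y,x) \<in> W"
  using wo unfolding well_order_on_def linear_order_on_def total_on_def by blast
lemma W_min: assumes "A \<subseteq> \<Omega>" "a \<in> A" shows "\<exists>m\<in>A. \<forall>y\<in>A. (y,m) \<in> W \<longrightarrow> y = m"
proof -
  have "wf (W - Id)" using wo unfolding well_order_on_def by blast
  then obtain m where "m \<in> A" "\<forall>y. (y,m) \<in> W - Id \<longrightarrow> y \<notin> A"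
    using assms(2) by (metis wfE_min)
  thus ?thesis by blast
qed

lemma phi_in: "g \<in> carrier G \<Longrightarrow> x \<in> \<Omega> \<Longrightarrow> \<phi> g x \<in> \<Omega>"
  using ga.element_image by blast
lemma phi_mult: "g \<in> carrier G \<Longrightarrow> h \<in> carrier G \<Longrightarrow> x \<in> \<Omega> \<Longrightarrow> \<phi> (g \<otimes> h) x = \<phi> g (\<phi> h x)"
  using ga.composition_rule by blast
lemma phi_inv1: "g \<in> carrier G \<Longrightarrow> x \<in> \<Omega> \<Longrightarrow> \<phi> (inv g) (\<phi> g x) = x"
  using ga.orbit_sym_aux by blast
lemma phi_inv2: "g \<in> carrier G \<Longrightarrow> x \<in> \<Omega> \<Longrightarrow> \<phi> g (\<phi> (inv g) x) = x"
  using ga.orbit_sym_aux[of "inv g" x] by simp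
lemma phi_one: "x \<in> \<Omega> \<Longrightarrow> \<phi> \<one> x = x"
  by (metis ga.id_eq_one restrict_apply')
lemma phi_inj: "g \<in> carrier G \<Longrightarrow> x \<in> \<Omega> \<Longrightarrow> y \<in> \<Omega> \<Longrightarrow> \<phi> g x = \<phi> g y \<Longrightarrow> x = y"
  by (metis phi_inv1)

lemma sr_mono: "g \<in> carrier G \<Longrightarrow> sr x y \<Longrightarrow> sr (\<phi> g x) (\<phi> g y)"
  unfolding strict_rel_def using op rO phi_inj by metis
lemma le_mono: "g \<in> carrier G \<Longrightarrow> (x,y) \<in> r \<Longrightarrow> (\<phi> g x, \<phi> g y) \<in> r"
  using op rO by metis
lemma sr_rev: "g \<in> carrier G \<Longrightarrow> x \<in> \<Omega> \<Longrightarrow> y \<in> \<Omega> \<Longrightarrow> sr (\<phi> g x) (\<phi> g y) \<Longrightarrow> sr x y"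
  using sr_mono[of "inv g" "\<phi> g x" "\<phi> g y"] phi_inv1 by simp
lemma sr_O: "sr x y \<Longrightarrow> x \<in> \<Omega> \<and> y \<in> \<Omega>"
  unfolding strict_rel_def using rO by blast
lemma sr_trans: "sr x y \<Longrightarrow> sr y z \<Longrightarrow> sr x z"
  unfolding strict_rel_def using r_trans r_antisym by blast
lemma sr_le_trans: "sr x y \<Longrightarrow> (y,z) \<in> r \<Longrightarrow> sr x z"
  unfolding strict_rel_def using r_trans r_antisym by blast
lemma le_sr_trans: "(x,y) \<in> r \<Longrightarrow> sr y z \<Longrightarrow> sr x z"
  unfolding strict_rel_def using r_trans r_antisym by blast
lemma sr_total: "x \<in> \<Omega> \<Longrightarrow> y \<in> \<Omega> \<Longrightarrow> x \<noteq> y \<Longrightarrow> sr x y \<or> sr y x"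
  unfolding strict_rel_def using r_total by blast
lemma sr_asym: "sr x y \<Longrightarrow> sr y x \<Longrightarrow> False"
  unfolding strict_rel_def using r_antisym by blast
lemma not_sr: "x \<in> \<Omega> \<Longrightarrow> y \<in> \<Omega> \<Longrightarrow> \<not> sr x y \<Longrightarrow> (y,x) \<in> r"
  unfolding strict_rel_def using r_total r_refl by blast

definition fm where "fm h c \<longleftrightarrow> c \<in> \<Omega> \<and> \<phi> h c \<noteq> c \<and> (\<forall>y\<in>\<Omega>. (y,c) \<in> W \<and> y \<noteq> c \<longrightarrow> \<phi> h y = y)"
definition pos where "pos h \<longleftrightarrow> h \<in> carrier G \<and> (\<exists>c. fm h c \<and> sr c (\<phi> h c))"
definition lt where "lt a b \<longleftrightarrow> a \<in> carrier G \<and> b \<in> carrier G \<and> pos (inv a \<otimes> b)"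

lemma posI: "h \<in> carrier G \<Longrightarrow> c \<in> \<Omega> \<Longrightarrow> (\<forall>y\<in>\<Omega>. (y,c) \<in> W \<and> y \<noteq> c \<longrightarrow> \<phi> h y = y) \<Longrightarrow> sr c (\<phi> h c) \<Longrightarrow> pos h"
  unfolding pos_def fm_def strict_rel_def by metis

lemma fm_exists: assumes "h \<in> carrier G" "h \<noteq> \<one>" shows "\<exists>c. fm h c"
proof -
  obtain d where d: "d \<in> \<Omega>" "\<phi> h d \<noteq> d" using faith assms by blast
  obtain m where m: "m \<in> {x\<in>\<Omega>. \<phi> h x \<noteq> x}" "\<forall>y\<in>{x\<in>\<Omega>. \<phi> h x \<noteq> x}. (y,m) \<in> W \<longrightarrow> y = m"
    using W_min[of "{x\<in>\<Omega>. \<phi> h x \<noteq> x}" d] d by blast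
  hence "fm h m" unfolding fm_def by blast
  thus ?thesis by blast
qed

lemma fm_unique: "fm h c \<Longrightarrow> fm h c' \<Longrightarrow> c = c'"
  unfolding fm_def using W_total by metis

lemma fm_le: "fm h c \<Longrightarrow> d \<in> \<Omega> \<Longrightarrow> \<phi> h d \<noteq> d \<Longrightarrow> (c,d) \<in> W"
  unfolding fm_def using W_total W_refl by metis

lemma fm_inv: assumes "h \<in> carrier G" "fm h c" shows "fm (inv h) c"
  using assms unfolding fm_def by (metis phi_inv1 phi_inv2)

lemma pos_or: assumes "h \<in> carrier G" "h \<noteq> \<one>" shows "pos h \<or> pos (inv h)"
proof -
  obtain c where c: "fm h c" using fm_exists assms by blast
  hence cO: "c \<in> \<Omega>" "\<phi> h c \<in> \<Omega>" "\<phi> h c \<noteq> c" using phi_in assms unfolding fm_def by auto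
  show ?thesis
  proof (cases "sr c (\<phi> h c)")
    case True thus ?thesis using c assms unfolding pos_def by blast
  next
    case False
    hence "sr (\<phi> h c) c" using sr_total cO by blast
    hence "sr c (\<phi> (inv h) c)" using sr_mono[of "inv h"] phi_inv1 assms cO by fastforce
    thus ?thesis using fm_inv[OF assms(1) c] assms unfolding pos_def by blast
  qed
qed

lemma pos_not_both: assumes "pos h" "pos (inv h)" shows False
proof -
  obtain c where c: "fm h c" "sr c (\<phi> h c)" "h \<in> carrier G" using assms unfolding pos_def by blast
  obtain c' where c': "fm (inv h) c'" "sr c' (\<phi> (inv h) c')" using assms unfolding pos_def by blast
  have "c' = c" using fm_unique fm_inv c c' by blast
  hence "sr (\<phi> h c) (\<phi> h (\<phi> (inv h) c))" using sr_mono c c' by blast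
  hence "sr (\<phi> h c) c" using phi_inv2 c fm_def by auto
  thus False using c sr_asym by blast
qed

lemma not_pos_one: "\<not> pos \<one>"
  unfolding pos_def fm_def using phi_one by blast

lemma pos_mult: assumes "pos a" "pos b" shows "pos (a \<otimes> b)"
proof -
  obtain c1 where c1: "fm a c1" "sr c1 (\<phi> a c1)" and a: "a \<in> carrier G" using assms unfolding pos_def by blast
  obtain c2 where c2: "fm b c2" "sr c2 (\<phi> b c2)" and b: "b \<in> carrier G" using assms unfolding pos_def by blast
  have O: "c1 \<in> \<Omega>" "c2 \<in> \<Omega>" using c1 c2 fm_def by auto
  have ab: "a \<otimes> b \<in> carrier G" using a b by simp
  consider "c1 = c2" | "(c1,c2) \<in> W" "c1 \<noteq> c2" | "(c2,c1) \<in> W" "c1 \<noteq> c2" using W_total O by blast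
  thus ?thesis
  proof cases
    case 1
    have fx: "\<forall>y\<in>\<Omega>. (y,c1) \<in> W \<and> y \<noteq> c1 \<longrightarrow> \<phi> (a \<otimes> b) y = y"
      using c1 c2 1 phi_mult a b unfolding fm_def by metis
    have "sr (\<phi> a c1) (\<phi> a (\<phi> b c1))" using c2 1 sr_mono a by blast
    hence "sr c1 (\<phi> (a \<otimes> b) c1)" using c1 sr_trans phi_mult a b O by metis
    thus ?thesis using fx ab O posI by blast
  next
    case 2
    have bc1: "\<phi> b c1 = c1" using c2 2 O unfolding fm_def by blast
    have fx: "\<forall>y\<in>\<Omega>. (y,c1) \<in> W \<and> y \<noteq> c1 \<longrightarrow> \<phi> (a \<otimes> b) y = y"
    proof (intro ballI impI)
      fix y assume y: "y \<in> \<Omega>" "(y,c1) \<in> W \<and> y \<noteq> c1"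
      have "(y,c2) \<in> W \<and> y \<noteq> c2" using y 2 W_trans W_antisym by metis
      thus "\<phi> (a \<otimes> b) y = y" using y c1 c2 phi_mult a b unfolding fm_def by metis
    qed
    have "sr c1 (\<phi> (a \<otimes> b) c1)" using c1 bc1 phi_mult a b O by metis
    thus ?thesis using fx ab O posI by blast
  next
    case 3
    have ac2: "\<phi> a c2 = c2" using c1 3 O unfolding fm_def by blast
    have fx: "\<forall>y\<in>\<Omega>. (y,c2) \<in> W \<and> y \<noteq> c2 \<longrightarrow> \<phi> (a \<otimes> b) y = y"
    proof (intro ballI impI)
      fix y assume y: "y \<in> \<Omega>" "(y,c2) \<in> W \<and> y \<noteq> c2"
      have "(y,c1) \<in> W \<and> y \<noteq> c1" using y 3 W_trans W_antisym by metis
      thus "\<phi> (a \<otimes> b) y = y" using y c1 c2 phi_mult a b unfolding fm_def by metis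
    qed
    have "sr (\<phi> a c2) (\<phi> a (\<phi> b c2))" using c2 sr_mono a by blast
    hence "sr c2 (\<phi> (a \<otimes> b) c2)" using ac2 phi_mult a b O by metis
    thus ?thesis using fx ab O posI by blast
  qed
qed

lemma alg1: "x \<in> carrier G \<Longrightarrow> y \<in> carrier G \<Longrightarrow> z \<in> carrier G \<Longrightarrow> (inv x \<otimes> y) \<otimes> (inv y \<otimes> z) = inv x \<otimes> z"
  by (simp add: m_assoc[symmetric]) (simp add: m_assoc)
lemma alg2: "x \<in> carrier G \<Longrightarrow> y \<in> carrier G \<Longrightarrow> inv (inv x \<otimes> y) = inv y \<otimes> x"
  by (simp add: inv_mult_group)
lemma alg3: "g \<in> carrier G \<Longrightarrow> x \<in> carrier G \<Longrightarrow> y \<in> carrier G \<Longrightarrow> inv (g \<otimes> x) \<otimes> (g \<otimes> y) = inv x \<otimes> y"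
  by (simp add: inv_mult_group m_assoc) (simp add: m_assoc[symmetric])
lemma alg4: "x \<in> carrier G \<Longrightarrow> y \<in> carrier G \<Longrightarrow> inv x \<otimes> y = \<one> \<Longrightarrow> x = y"
  by (metis inv_closed inv_equality inv_inv)

lemma lo_thm: "left_ordering G lt"
proof -
  have A: "\<forall>x y. lt x y \<longrightarrow> x \<in> carrier G \<and> y \<in> carrier G" unfolding lt_def by blast
  have B: "\<forall>x \<in> carrier G. \<not> lt x x" unfolding lt_def using not_pos_one by simp
  have C: "\<forall>x \<in> carrier G. \<forall>y \<in> carrier G. \<forall>z \<in> carrier G. lt x y \<longrightarrow> lt y z \<longrightarrow> lt x z"
    unfolding lt_def using pos_mult alg1 by metis
  have D: "\<forall>x \<in> carrier G. \<forall>y \<in> carrier G. x \<noteq> y \<longrightarrow> lt x y \<or> lt y x"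
  proof (intro ballI impI)
    fix x y assume c: "x \<in> carrier G" "y \<in> carrier G" "x \<noteq> y"
    hence "inv x \<otimes> y \<noteq> \<one>" using alg4 by blast
    hence "pos (inv x \<otimes> y) \<or> pos (inv (inv x \<otimes> y))" using pos_or c by simp
    thus "lt x y \<or> lt y x" unfolding lt_def using alg2 c by simp
  qed
  have E: "\<forall>g \<in> carrier G. \<forall>x \<in> carrier G. \<forall>y \<in> carrier G. lt x y \<longrightarrow> lt (g \<otimes> x) (g \<otimes> y)"
    unfolding lt_def using alg3 by simp
  show ?thesis unfolding left_ordering_def using A B C D E by blast
qed

lemma fm_conj:
  assumes seg: "initial_segment \<Omega> W \<Omega>0" and k: "k \<in> carrier G" "\<forall>x\<in>\<Omega>0. \<phi> k x = x"
    and h: "h \<in> carrier G" "fm h c" "c \<in> \<Omega>0"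
  shows "fm (inv k \<otimes> h) c"
proof -
  have cO: "c \<in> \<Omega>" "\<phi> h c \<in> \<Omega>" using h fm_def phi_in by auto
  have fx: "\<forall>y\<in>\<Omega>. (y,c) \<in> W \<and> y \<noteq> c \<longrightarrow> \<phi> (inv k \<otimes> h) y = y"
  proof (intro ballI impI)
    fix y assume y: "y \<in> \<Omega>" "(y,c) \<in> W \<and> y \<noteq> c"
    hence "y \<in> \<Omega>0" using seg h unfolding initial_segment_def by blast
    hence "\<phi> k y = y" using k by blast
    hence "\<phi> (inv k) y = y" using phi_inv1 k y by metis
    moreover have "\<phi> h y = y" using h y fm_def by blast
    ultimately show "\<phi> (inv k \<otimes> h) y = y" using phi_mult k h y by simp
  qed
  have "\<phi> (inv k \<otimes> h) c \<noteq> c"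
  proof
    assume "\<phi> (inv k \<otimes> h) c = c"
    hence "\<phi> (inv k) (\<phi> h c) = c" using phi_mult k h cO by simp
    hence "\<phi> h c = \<phi> k c" using phi_inv2 k cO by metis
    thus False using k h fm_def by auto
  qed
  thus ?thesis using fx cO unfolding fm_def by blast
qed

lemma convex_thm:
  assumes seg: "initial_segment \<Omega> W \<Omega>0"
  shows "convex_subgroup_wrt G lt (pointwise_stabilizer G \<phi> \<Omega>0)"
  unfolding convex_subgroup_wrt_def
proof (intro ballI impI)
  fix f1 f2 h assume f1: "f1 \<in> pointwise_stabilizer G \<phi> \<Omega>0" and f2: "f2 \<in> pointwise_stabilizer G \<phi> \<Omega>0"
    and h: "h \<in> carrier G" and l1: "lt f1 h" and l2: "lt h f2"
  have f1c: "f1 \<in> carrier G" "\<forall>x\<in>\<Omega>0. \<phi> f1 x = x" using f1 unfolding pointwise_stabilizer_def by auto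
  have f2c: "f2 \<in> carrier G" "\<forall>x\<in>\<Omega>0. \<phi> f2 x = x" using f2 unfolding pointwise_stabilizer_def by auto
  have O0: "\<Omega>0 \<subseteq> \<Omega>" using seg unfolding initial_segment_def by blast
  show "h \<in> pointwise_stabilizer G \<phi> \<Omega>0"
  proof (rule ccontr)
    assume "h \<notin> pointwise_stabilizer G \<phi> \<Omega>0"
    then obtain d where d: "d \<in> \<Omega>0" "\<phi> h d \<noteq> d" using h unfolding pointwise_stabilizer_def by auto
    have "h \<noteq> \<one>" using d O0 phi_one by auto
    then obtain c where c: "fm h c" using fm_exists h by blast
    have "(c,d) \<in> W" using fm_le c d O0 by blast
    hence c0: "c \<in> \<Omega>0" using seg d unfolding initial_segment_def fm_def using c fm_def by blast
    have cO: "c \<in> \<Omega>" "\<phi> h c \<in> \<Omega>" using c fm_def phi_in h by auto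
    have fc1: "\<phi> f1 c = c" "\<phi> f2 c = c" using f1c f2c c0 by auto
    have m1: "fm (inv f1 \<otimes> h) c" using fm_conj[OF seg f1c h c c0] .
    obtain c' where c': "fm (inv f1 \<otimes> h) c'" "sr c' (\<phi> (inv f1 \<otimes> h) c')" using l1 unfolding lt_def pos_def by blast
    have "c' = c" using fm_unique m1 c' by blast
    hence "sr c (\<phi> (inv f1) (\<phi> h c))" using c' phi_mult f1c h cO by simp
    hence "sr (\<phi> f1 c) (\<phi> f1 (\<phi> (inv f1) (\<phi> h c)))" using sr_mono f1c by blast
    hence s1: "sr c (\<phi> h c)" using fc1 phi_inv2 f1c cO by simp
    have m2: "fm (inv (inv f2 \<otimes> h)) c" using fm_inv fm_conj[OF seg f2c h c c0] f2c h by simp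
    have "pos (inv (inv f2 \<otimes> h))" using l2 alg2 f2c h unfolding lt_def by simp
    then obtain c'' where c'': "fm (inv (inv f2 \<otimes> h)) c''" "sr c'' (\<phi> (inv (inv f2 \<otimes> h)) c'')" unfolding pos_def by blast
    have "c'' = c" using fm_unique m2 c'' by blast
    hence "sr c (\<phi> (inv (inv f2 \<otimes> h)) c)" using c'' by simp
    hence "sr (\<phi> (inv f2 \<otimes> h) c) (\<phi> (inv f2 \<otimes> h) (\<phi> (inv (inv f2 \<otimes> h)) c))" using sr_mono f2c h by simp
    hence "sr (\<phi> (inv f2) (\<phi> h c)) c" using phi_inv2 phi_mult f2c h cO by simp
    hence "sr (\<phi> f2 (\<phi> (inv f2) (\<phi> h c))) (\<phi> f2 c)" using sr_mono f2c by blast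
    hence "sr (\<phi> h c) c" using fc1 phi_inv2 f2c cO by simp
    thus False using s1 sr_asym by blast
  qed
qed

lemma pow1: "g \<in> carrier G \<Longrightarrow> g [^] (1::nat) = g"
  by simp
lemma pow2: "g \<in> carrier G \<Longrightarrow> g [^] (2::nat) = g \<otimes> g"
  by (simp add: numeral_2_eq_2)

lemma conr_thm:
  assumes nc: "\<not> (\<exists>f g u v w. is_crossing G \<Omega> r \<phi> f g u v w)"
  shows "conradian G lt"
  unfolding conradian_def
proof (intro ballI impI)
  fix f g assume f: "f \<in> carrier G" and g: "g \<in> carrier G" and "lt \<one> f" "lt \<one> g"
  hence pf: "pos f" and pg: "pos g" unfolding lt_def by auto
  obtain a where a: "fm f a" "sr a (\<phi> f a)" using pf pos_def by blast
  obtain b where b: "fm g b" "sr b (\<phi> g b)" using pg pos_def by blast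
  have aO: "a \<in> \<Omega>" and bO: "b \<in> \<Omega>" using a b fm_def by auto
  have gfix: "\<forall>y\<in>\<Omega>. (y,b) \<in> W \<and> y \<noteq> b \<longrightarrow> \<phi> g y = y" using b fm_def by blast
  have gifix: "\<forall>y\<in>\<Omega>. (y,b) \<in> W \<and> y \<noteq> b \<longrightarrow> \<phi> (inv g) y = y" using gfix phi_inv1 g by metis
  have ffix0: "\<forall>y\<in>\<Omega>. (y,a) \<in> W \<and> y \<noteq> a \<longrightarrow> \<phi> f y = y" using a fm_def by blast
  show "\<exists>n::nat. n \<ge> 1 \<and> lt g (f \<otimes> (g [^] n))"
  proof (cases "(a,b) \<in> W \<and> a \<noteq> b")
    case True
    have ga: "\<phi> g a = a" using gfix True aO by blast
    have fx: "\<forall>y\<in>\<Omega>. (y,a) \<in> W \<and> y \<noteq> a \<longrightarrow> \<phi> (inv g \<otimes> (f \<otimes> g)) y = y"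
    proof (intro ballI impI)
      fix y assume y: "y \<in> \<Omega>" "(y,a) \<in> W \<and> y \<noteq> a"
      hence yb: "(y,b) \<in> W \<and> y \<noteq> b" using True W_trans W_antisym by metis
      show "\<phi> (inv g \<otimes> (f \<otimes> g)) y = y" using phi_mult f g y yb gfix gifix ffix0 by simp
    qed
    have "sr (\<phi> (inv g) a) (\<phi> (inv g) (\<phi> f a))" using sr_mono a g by simp
    hence "sr a (\<phi> (inv g \<otimes> (f \<otimes> g)) a)" using ga phi_inv1[OF g aO] phi_mult f g aO by simp
    hence "pos (inv g \<otimes> (f \<otimes> g))" using posI fx aO f g by simp
    hence "lt g (f \<otimes> (g [^] (1::nat)))" unfolding lt_def using f g by simp
    thus ?thesis by blast
  next
    case False
    hence ba: "(b,a) \<in> W" using W_total W_refl aO bO by blast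
    have ffix: "\<forall>y\<in>\<Omega>. (y,b) \<in> W \<and> y \<noteq> b \<longrightarrow> \<phi> f y = y"
    proof (intro ballI impI)
      fix y assume y: "y \<in> \<Omega>" "(y,b) \<in> W \<and> y \<noteq> b"
      hence "(y,a) \<in> W \<and> y \<noteq> a" using ba W_trans W_antisym by metis
      thus "\<phi> f y = y" using ffix0 y by blast
    qed
    have fb: "(b, \<phi> f b) \<in> r"
    proof (cases "a = b")
      case True thus ?thesis using a unfolding strict_rel_def by blast
    next
      case False thus ?thesis using ffix0 ba bO r_refl by simp
    qed
    show ?thesis
    proof (rule ccontr)
      assume nn: "\<not> (\<exists>n::nat. n \<ge> 1 \<and> lt g (f \<otimes> (g [^] n)))"
      define p1 where "p1 = \<phi> g b"
      define p2 where "p2 = \<phi> g p1"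
      have p1O: "p1 \<in> \<Omega>" and p2O: "p2 \<in> \<Omega>" using phi_in g bO p1_def p2_def by auto
      have bp1: "sr b p1" using b p1_def by simp
      have p12: "sr p1 p2" using sr_mono[OF g bp1] p1_def p2_def by simp
      have A: "\<not> sr p1 (\<phi> f p2)"
      proof
        assume s: "sr p1 (\<phi> f p2)"
        have fx: "\<forall>y\<in>\<Omega>. (y,b) \<in> W \<and> y \<noteq> b \<longrightarrow> \<phi> (inv g \<otimes> (f \<otimes> (g \<otimes> g))) y = y"
          using phi_mult f g gfix gifix ffix by simp
        have "sr (\<phi> (inv g) p1) (\<phi> (inv g) (\<phi> f p2))" using sr_mono s g by simp
        hence "sr b (\<phi> (inv g \<otimes> (f \<otimes> (g \<otimes> g))) b)"
          using phi_inv1[OF g bO] phi_mult f g bO phi_in p1_def p2_def by simp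
        hence "pos (inv g \<otimes> (f \<otimes> (g \<otimes> g)))" using posI fx bO f g by simp
        hence "lt g (f \<otimes> (g [^] (2::nat)))" unfolding lt_def using f g pow2 by simp
        thus False using nn by force
      qed
      have fp2: "(\<phi> f p2, p1) \<in> r" using not_sr A phi_in f p1O p2O by blast
      have fp1: "sr (\<phi> f p1) p1" using sr_mono[OF f p12] fp2 sr_le_trans by blast
      have bfp1: "sr b (\<phi> f p1)" using fb sr_mono[OF f bp1] le_sr_trans by blast
      have fp1O: "\<phi> f p1 \<in> \<Omega>" using phi_in f p1O by blast
      have fg: "f \<otimes> g \<in> carrier G" using f g by simp
      have P1: "\<forall>n::nat. sr (\<phi> ((f \<otimes> g) [^] n) b) p1"
      proof
        fix n :: nat show "sr (\<phi> ((f \<otimes> g) [^] n) b) p1"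
        proof (induction n)
          case 0 thus ?case using bp1 phi_one bO by simp
        next
          case (Suc n)
          let ?y = "\<phi> ((f \<otimes> g) [^] n) b"
          have yO: "?y \<in> \<Omega>" using Suc sr_O by blast
          have "sr (\<phi> f (\<phi> g ?y)) (\<phi> f p2)" using sr_mono[OF f sr_mono[OF g Suc]] p2_def by simp
          hence "sr (\<phi> f (\<phi> g ?y)) p1" using fp2 sr_le_trans by blast
          thus ?case using nat_pow_Suc2[OF fg] phi_mult f g fg yO bO by simp
        qed
      qed
      have P2: "\<forall>n::nat. sr b (\<phi> (f [^] n) p1)"
      proof
        fix n :: nat show "sr b (\<phi> (f [^] n) p1)"
        proof (induction n)
          case 0 thus ?case using bp1 phi_one p1O by simp
        next
          case (Suc n)
          let ?z = "\<phi> (f [^] n) p1"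
          have zO: "?z \<in> \<Omega>" using Suc sr_O by blast
          have "sr b (\<phi> f ?z)" using sr_mono[OF f Suc] fb le_sr_trans by blast
          thus ?case using nat_pow_Suc2[OF f] phi_mult f zO p1O nat_pow_closed[OF f] by simp
        qed
      qed
      have N: "sr (\<phi> (f [^] (2::nat)) p1) (\<phi> f p1)"
        using sr_mono[OF f fp1] pow2[OF f] phi_mult f p1O by simp
      have "sr (\<phi> g b) (\<phi> g (\<phi> f p1))" using sr_mono[OF g bfp1] .
      hence "sr (\<phi> f p1) (\<phi> f (\<phi> g (\<phi> f p1)))" using sr_mono[OF f] p1_def by simp
      hence M: "sr (\<phi> f p1) (\<phi> ((f \<otimes> g) [^] (2::nat)) b)"
        using pow2[OF fg] phi_mult f g fg bO phi_in p1_def by simp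
      have "is_crossing G \<Omega> r \<phi> f (f \<otimes> g) b p1 (\<phi> f p1)"
        unfolding is_crossing_def using f fg bO p1O fp1O bfp1 fp1 P1 P2 N M by blast
      thus False using nc by blast
    qed
  qed
qed

end

theorem mainTheorem18:
  fixes G :: "('g, 'm) monoid_scheme" and \<Omega> :: "'w set"
    and r :: "'w rel" and W :: "'w rel" and \<phi> :: "'g \<Rightarrow> 'w \<Rightarrow> 'w"
  assumes "group G"
    and "well_order_on \<Omega> W"
    and "linear_order_on \<Omega> r"
    and "group_action G \<Omega> \<phi>"
    and faithful: "\<forall>g \<in> carrier G. (\<forall>x \<in> \<Omega>. \<phi> g x = x) \<longrightarrow> g = \<one>\<^bsub>G\<^esub>"
    and order_preserving: "\<forall>g \<in> carrier G. \<forall>x \<in> \<Omega>. \<forall>y \<in> \<Omega>. (x, y) \<in> r \<longrightarrow> (\<phi> g x, \<phi> g y) \<in> r"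
  shows "\<exists>lt. left_ordering G lt \<and>
           (\<forall>\<Omega>0. initial_segment \<Omega> W \<Omega>0 \<longrightarrow>
                  convex_subgroup_wrt G lt (pointwise_stabilizer G \<phi> \<Omega>0)) \<and>
           ((\<not> (\<exists>f g u v w. is_crossing G \<Omega> r \<phi> f g u v w)) \<longrightarrow> conradian G lt)"
proof -
  interpret S G \<Omega> r W \<phi> unfolding S_def using assms by blast
  show ?thesis using lo_thm convex_thm conr_thm by blast
qed

end
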